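(* Let $k\ge1$ be an integer, $H_1,H_2>\tfrac12$ and $\lambda_1,\lambda_2>0$. For every $t,s\in\mathbb{R}$, the function $$h_{t,s}\big((x_1,y_1),\ldots,(x_k,y_k)\big)=\int_0^t\int_0^s\prod_{j=1}^k (a-x_j)_+^{-(\frac12+\frac{1-H_1}{k})}e^{-\lambda_1(a-x_j)_+}(b-y_j)_+^{-(\frac12+\frac{1-H_2}{k})}e^{-\lambda_2(b-y_j)_+}\,db\,da$$ is well defined and belongs to $L^2\big((\mathbb{R}^2)^k\big)$.
   Context: $(u)_+=u\,\mathbf 1(u>0)$, and a factor $(u)_+^{\gamma}e^{-\lambda(u)_+}$ is interpreted as $0$ when $u\le 0$. Integrals $\int_0^t$ with $t<0$ are oriented, $\int_0^t=-\int_t^0$. *)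

theory Defs
  imports "HOL-Analysis.Analysis"
begin

definition kern :: "nat \<Rightarrow> real \<Rightarrow> real \<Rightarrow> real \<Rightarrow> real" where
  "kern k H lam u = (if u > 0 then u powr (- (1/2 + (1 - H) / real k)) * exp (- lam * u) else 0)"

definition integrand :: "real \<Rightarrow> real \<Rightarrow> real \<Rightarrow> real \<Rightarrow> (real \<times> real) ^ 'k::finite \<Rightarrow> real \<Rightarrow> real \<Rightarrow> real" where
  "integrand H1 H2 lam1 lam2 z a b =
     (\<Prod>j\<in>UNIV. kern CARD('k) H1 lam1 (a - fst (z $ j)) * kern CARD('k) H2 lam2 (b - snd (z $ j)))"

text \<open>Oriented iterated integral: int_0^t int_0^s ... db da (interval_lebesgue_integral is oriented).\<close>
definition hfun :: "real \<Rightarrow> real \<Rightarrow> real \<Rightarrow> real \<Rightarrow> real \<Rightarrow> real \<Rightarrow> (real \<times> real) ^ 'k::finite \<Rightarrow> real" where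
  "hfun H1 H2 lam1 lam2 t s z =
     (LBINT a=0..t. (LBINT b=0..s. integrand H1 H2 lam1 lam2 z a b))"

end

theory Submission
  imports Defs
begin



lemma kern_meas[measurable]: "kern k H lam \<in> borel_measurable borel"
  unfolding kern_def by measurable

lemma fst_nth_meas[measurable (raw)]:
  "f \<in> M \<rightarrow>\<^sub>M (borel :: ((real\<times>real)^'k::finite) measure) \<Longrightarrow> (\<lambda>x. fst (f x $ j)) \<in> borel_measurable M"
  by (rule measurable_compose[of f M borel "\<lambda>z. fst (z $ j)"])
     (auto intro!: borel_measurable_continuous_onI continuous_intros)
lemma snd_nth_meas[measurable (raw)]:
  "f \<in> M \<rightarrow>\<^sub>M (borel :: ((real\<times>real)^'k::finite) measure) \<Longrightarrow> (\<lambda>x. snd (f x $ j)) \<in> borel_measurable M"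
  by (rule measurable_compose[of f M borel "\<lambda>z. snd (z $ j)"])
     (auto intro!: borel_measurable_continuous_onI continuous_intros)

lemma integrand_meas[measurable (raw)]:
  assumes [measurable]: "f \<in> M \<rightarrow>\<^sub>M (borel :: ((real\<times>real)^'k::finite) measure)" "g \<in> borel_measurable M" "h \<in> borel_measurable M"
  shows "(\<lambda>x. integrand H1 H2 lam1 lam2 (f x) (g x) (h x)) \<in> borel_measurable M"
  unfolding integrand_def by measurable

lemma swapz:
  fixes f :: "'a::euclidean_space \<Rightarrow> real \<Rightarrow> ennreal"
  assumes "(\<lambda>(z,a). f z a) \<in> borel_measurable (lborel \<Otimes>\<^sub>M lborel)"
  shows "(\<integral>\<^sup>+z. (\<integral>\<^sup>+a. f z a \<partial>lborel) \<partial>lborel) = (\<integral>\<^sup>+a. (\<integral>\<^sup>+z. f z a \<partial>lborel) \<partial>lborel)"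
  using lborel_pair.Fubini'[OF assms] by simp



lemma gamma_fin:
  fixes p lam :: real assumes p: "p > 0" and lam: "lam > 0"
  shows "(\<integral>\<^sup>+u. ennreal (indicator {0..} u * u powr (p-1) * exp (-lam*u)) \<partial>lborel) < \<infinity>"
proof -
  have "(\<integral>\<^sup>+u. ennreal (indicator {0..} u * u powr (p-1) * exp (-lam*u)) \<partial>lborel)
     = ennreal \<bar>1/lam\<bar> * (\<integral>\<^sup>+x. ennreal (indicator {0..} (0 + (1/lam)*x) * (0 + (1/lam)*x) powr (p-1) * exp (-lam*(0 + (1/lam)*x))) \<partial>lborel)"
    by (rule nn_integral_real_affine) (use lam in auto)
  also have "(\<integral>\<^sup>+x. ennreal (indicator {0..} (0 + (1/lam)*x) * (0 + (1/lam)*x) powr (p-1) * exp (-lam*(0 + (1/lam)*x))) \<partial>lborel)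
     = (\<integral>\<^sup>+x. ennreal ((1/lam) powr (p-1)) * ennreal (indicator {0..} x * x powr (p - 1) / exp x) \<partial>lborel)"
  proof (rule nn_integral_cong)
    fix x :: real
    show "ennreal (indicator {0..} (0 + (1/lam)*x) * (0 + (1/lam)*x) powr (p-1) * exp (-lam*(0 + (1/lam)*x)))
       = ennreal ((1/lam) powr (p-1)) * ennreal (indicator {0..} x * x powr (p - 1) / exp x)"
    proof (cases "x \<ge> 0")
      case True
      have "(x / lam) powr (p - 1) / exp x = (1/lam) powr (p-1) * (x powr (p - 1) / exp x)"
        using True lam by (simp add: powr_divide)
      then show ?thesis using True lam by (simp add: ennreal_mult[symmetric] exp_minus field_simps indicator_def)
    qed (use lam in \<open>auto simp: indicator_def zero_le_mult_iff zero_le_divide_iff\<close>)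
  qed
  also have "\<dots> = ennreal ((1/lam) powr (p-1)) * ennreal (Gamma p)"
    by (subst nn_integral_cmult) (auto simp: Gamma_conv_nn_integral_real[OF p])
  finally show ?thesis by (simp add: ennreal_mult_less_top)
qed



lemma gamma_fin':
  fixes r lam :: real assumes "r > -1" and "lam > 0"
  shows "(\<integral>\<^sup>+u. ennreal (indicator {0..} u * u powr r * exp (-lam*u)) \<partial>lborel) < \<infinity>"
  using gamma_fin[of "r+1" lam] assms by simp

lemma powP:
  fixes u d D eps beta :: real
  assumes u: "u > 0" and d: "d > 0" "d \<le> D" and eps: "eps > 0"
  shows "(u+d) powr (-beta) \<le> (2 powr \<bar>eps-beta\<bar> * (1 + D powr \<bar>eps-beta\<bar>)) * d powr (-eps) * (u powr (eps-beta) + 1)"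
proof (cases "beta \<ge> eps")
  case True
  have C1: "1 \<le> 2 powr \<bar>eps-beta\<bar> * (1 + D powr \<bar>eps-beta\<bar>)"
  proof -
    have "1 \<le> 2 powr \<bar>eps-beta\<bar>" by (rule ge_one_powr_ge_zero) auto
    moreover have "1 \<le> 1 + D powr \<bar>eps-beta\<bar>" by simp
    ultimately show ?thesis by (metis mult_mono' mult_1 zero_le_one)
  qed
  have "(u+d) powr (-beta) = (u+d) powr (eps-beta) * (u+d) powr (-eps)"
    by (simp add: powr_add[symmetric])
  also have "\<dots> \<le> u powr (eps-beta) * d powr (-eps)"
    apply (rule mult_mono)
    using True u d eps by (auto intro!: powr_mono2')
  also have "\<dots> \<le> 1 * d powr (-eps) * (u powr (eps-beta) + 1)"
    by (simp add: algebra_simps)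
  also have "\<dots> \<le> (2 powr \<bar>eps-beta\<bar> * (1 + D powr \<bar>eps-beta\<bar>)) * d powr (-eps) * (u powr (eps-beta) + 1)"
    apply (rule mult_right_mono)+ using C1 by auto
  finally show ?thesis .
next
  case False
  define q where "q = eps - beta"
  have q: "q > 0" "\<bar>eps-beta\<bar> = q" using False by (auto simp: q_def)
  have "(u+d) powr (-beta) = (u+d) powr q * (u+d) powr (-eps)"
    by (simp add: powr_add[symmetric] q_def)
  also have "\<dots> \<le> (2 * max u D) powr q * d powr (-eps)"
    apply (rule mult_mono)
    subgoal using q u d by (intro powr_mono2) auto
    subgoal using u d eps by (intro powr_mono2') auto
    by auto
  also have "(2 * max u D) powr q = 2 powr q * max u D powr q"
    using u by (simp add: powr_mult)
  also have "max u D powr q \<le> u powr q + D powr q"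
    by (simp add: max_def)
  also have "u powr q + D powr q \<le> (1 + D powr q) * (u powr q + 1)"
    by (simp add: algebra_simps)
  finally show ?thesis using q
    by (simp add: q_def mult_left_mono mult_right_mono mult_ac)
qed



definition gk :: "real \<Rightarrow> real \<Rightarrow> real \<Rightarrow> real" where
  "gk beta lam u = (if u > 0 then u powr (-beta) * exp (-lam*u) else 0)"

lemma gk_nonneg: "gk beta lam u \<ge> 0" by (simp add: gk_def)

lemma gk_meas[measurable]: "gk beta lam \<in> borel_measurable borel"
  unfolding gk_def by measurable

lemma gk_pointwise:
  fixes u d D eps beta lam :: real
  assumes u: "u > 0" and d: "d > 0" "d \<le> D" and eps: "eps > 0" and lam: "lam > 0"
  defines "C0 \<equiv> 2 powr \<bar>eps-beta\<bar> * (1 + D powr \<bar>eps-beta\<bar>)"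
  shows "gk beta lam u * gk beta lam (u+d) \<le> C0 * d powr (-eps) *
           (indicator {0..} u * u powr (eps-2*beta) * exp (-lam*u) + indicator {0..} u * u powr (-beta) * exp (-lam*u))"
proof -
  have "gk beta lam u * gk beta lam (u+d) = (u powr (-beta) * exp (-lam*u)) * ((u+d) powr (-beta) * exp (-lam*(u+d)))"
    using u d by (simp add: gk_def)
  also have "\<dots> \<le> (u powr (-beta) * exp (-lam*u)) * ((u+d) powr (-beta))"
    apply (rule mult_left_mono) using u d lam by (auto intro!: mult_left_le)
  also have "\<dots> \<le> (u powr (-beta) * exp (-lam*u)) * (C0 * d powr (-eps) * (u powr (eps-beta) + 1))"
    apply (rule mult_left_mono) using powP[OF u d eps, of beta] by (auto simp: C0_def)
  also have "\<dots> = C0 * d powr (-eps) * (u powr (-beta) * u powr (eps-beta) * exp (-lam*u) + u powr (-beta) * exp (-lam*u))"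
    by (simp add: algebra_simps)
  also have "u powr (-beta) * u powr (eps-beta) = u powr (eps - 2*beta)"
    by (simp add: powr_add[symmetric])
  finally show ?thesis using u by simp
qed

lemma G_half:
  fixes beta lam eps D :: real
  assumes beta: "beta < 1" and lam: "lam > 0" and eps: "eps > 0" "eps > 2*beta - 1" and D: "D > 0"
  shows "\<exists>C\<ge>0. \<forall>a a'. a < a' \<longrightarrow> a' - a \<le> D \<longrightarrow>
     (\<integral>\<^sup>+x. ennreal (gk beta lam (a-x) * gk beta lam (a'-x)) \<partial>lborel) \<le> ennreal (C * (a'-a) powr (-eps))"
proof -
  define C0 where "C0 = 2 powr \<bar>eps-beta\<bar> * (1 + D powr \<bar>eps-beta\<bar>)"
  define I1 where "I1 = (\<integral>\<^sup>+u. ennreal (indicator {0..} u * u powr (eps-2*beta) * exp (-lam*u)) \<partial>lborel)"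
  define I2 where "I2 = (\<integral>\<^sup>+u. ennreal (indicator {0..} u * u powr (-beta) * exp (-lam*u)) \<partial>lborel)"
  have I1: "I1 < \<infinity>" unfolding I1_def by (rule gamma_fin') (use eps lam in auto)
  have I2: "I2 < \<infinity>" unfolding I2_def by (rule gamma_fin') (use beta lam in auto)
  have C0: "C0 \<ge> 0" by (simp add: C0_def)
  define C where "C = C0 * (enn2real I1 + enn2real I2)"
  show ?thesis
  proof (intro exI[of _ C] conjI allI impI)
    show "C \<ge> 0" using C0 by (simp add: C_def)
    fix a a' :: real assume aa: "a < a'" "a' - a \<le> D"
    define d where "d = a' - a"
    have d: "d > 0" "d \<le> D" using aa by (auto simp: d_def)
    have "(\<integral>\<^sup>+x. ennreal (gk beta lam (a-x) * gk beta lam (a'-x)) \<partial>lborel)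
        = ennreal \<bar>-1\<bar> * (\<integral>\<^sup>+u. ennreal (gk beta lam (a-(a + (-1)*u)) * gk beta lam (a'-(a + (-1)*u))) \<partial>lborel)"
      by (rule nn_integral_real_affine) auto
    also have "\<dots> = (\<integral>\<^sup>+u. ennreal (gk beta lam u * gk beta lam (u+d)) \<partial>lborel)"
      by (simp add: d_def algebra_simps)
    also have "\<dots> \<le> (\<integral>\<^sup>+u. ennreal (C0 * d powr (-eps)) *
         (ennreal (indicator {0..} u * u powr (eps-2*beta) * exp (-lam*u)) + ennreal (indicator {0..} u * u powr (-beta) * exp (-lam*u))) \<partial>lborel)"
    proof (rule nn_integral_mono)
      fix u :: real
      show "ennreal (gk beta lam u * gk beta lam (u+d)) \<le> ennreal (C0 * d powr (-eps)) *
         (ennreal (indicator {0..} u * u powr (eps-2*beta) * exp (-lam*u)) + ennreal (indicator {0..} u * u powr (-beta) * exp (-lam*u)))"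
      proof (cases "u > 0")
        case True
        have "ennreal (gk beta lam u * gk beta lam (u+d)) \<le> ennreal (C0 * d powr (-eps) *
           (indicator {0..} u * u powr (eps-2*beta) * exp (-lam*u) + indicator {0..} u * u powr (-beta) * exp (-lam*u)))"
          using gk_pointwise[OF True d eps(1) lam, of beta] by (simp add: C0_def)
        also have "\<dots> = ennreal (C0 * d powr (-eps)) *
         (ennreal (indicator {0..} u * u powr (eps-2*beta) * exp (-lam*u)) + ennreal (indicator {0..} u * u powr (-beta) * exp (-lam*u)))"
          apply (subst ennreal_mult)
          subgoal using C0 by simp
          subgoal by simp
          apply (subst ennreal_plus)
          by simp_all
        finally show ?thesis .
      qed (simp add: gk_def)
    qed
    also have "\<dots> = ennreal (C0 * d powr (-eps)) * (I1 + I2)"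
      unfolding I1_def I2_def
      by (subst nn_integral_cmult) (auto simp: nn_integral_add)
    also have "I1 + I2 = ennreal (enn2real I1 + enn2real I2)"
      using I1 I2 by (subst ennreal_plus) (auto simp: ennreal_enn2real_if)
    also have "ennreal (C0 * d powr (-eps)) * ennreal (enn2real I1 + enn2real I2) = ennreal (C * (a'-a) powr (-eps))"
      using C0 by (subst ennreal_mult[symmetric]) (auto simp: C_def d_def mult_ac)
    finally show "(\<integral>\<^sup>+x. ennreal (gk beta lam (a-x) * gk beta lam (a'-x)) \<partial>lborel) \<le> ennreal (C * (a'-a) powr (-eps))" .
  qed
qed



lemma G_bound:
  fixes beta lam eps D :: real
  assumes beta: "beta < 1" and lam: "lam > 0" and eps: "eps > 0" "eps > 2*beta - 1" and D: "D > 0"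
  shows "\<exists>C\<ge>0. \<forall>a a'. a \<noteq> a' \<longrightarrow> \<bar>a - a'\<bar> \<le> D \<longrightarrow>
     (\<integral>\<^sup>+x. ennreal (gk beta lam (a-x) * gk beta lam (a'-x)) \<partial>lborel) \<le> ennreal (C * \<bar>a - a'\<bar> powr (-eps))"
proof -
  obtain C where C: "C \<ge> 0" and H: "\<And>a a'. a < a' \<Longrightarrow> a' - a \<le> D \<Longrightarrow>
     (\<integral>\<^sup>+x. ennreal (gk beta lam (a-x) * gk beta lam (a'-x)) \<partial>lborel) \<le> ennreal (C * (a'-a) powr (-eps))"
    using G_half[OF assms] by blast
  show ?thesis
  proof (intro exI[of _ C] conjI allI impI)
    fix a a' :: real assume aa: "a \<noteq> a'" "\<bar>a - a'\<bar> \<le> D"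
    show "(\<integral>\<^sup>+x. ennreal (gk beta lam (a-x) * gk beta lam (a'-x)) \<partial>lborel) \<le> ennreal (C * \<bar>a - a'\<bar> powr (-eps))"
    proof (cases "a < a'")
      case True then show ?thesis using H[of a a'] aa by (simp add: abs_if)
    next
      case False
      then have "a' < a" using aa by auto
      then show ?thesis using H[of a' a] aa by (simp add: abs_if mult.commute)
    qed
  qed (use C in auto)
qed

lemma abs_pow_int:
  fixes q :: real assumes q: "q < 1"
  shows "(\<integral>\<^sup>+y. ennreal (\<bar>y\<bar> powr (-q) * exp (-\<bar>y\<bar>)) \<partial>lborel) < \<infinity>"
proof -
  define g where "g = (\<lambda>y::real. ennreal (indicator {0..} y * y powr (-q) * exp (-1*y)))"
  have gm[measurable]: "g \<in> borel_measurable borel" unfolding g_def by measurable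
  have fin: "integral\<^sup>N lborel g < \<infinity>" unfolding g_def by (rule gamma_fin') (use q in auto)
  have "(\<integral>\<^sup>+y. ennreal (\<bar>y\<bar> powr (-q) * exp (-\<bar>y\<bar>)) \<partial>lborel) \<le> (\<integral>\<^sup>+y. g y + g (0 + (-1) * y) \<partial>lborel)"
  proof (rule nn_integral_mono)
    fix y :: real
    show "ennreal (\<bar>y\<bar> powr (-q) * exp (-\<bar>y\<bar>)) \<le> g y + g (0 + (-1) * y)"
      by (cases "y \<ge> 0") (auto simp: g_def indicator_def)
  qed
  also have "\<dots> = integral\<^sup>N lborel g + (\<integral>\<^sup>+y. g (0 + (-1) * y) \<partial>lborel)"
    by (rule nn_integral_add) auto
  also have "(\<integral>\<^sup>+y. g (0 + (-1) * y) \<partial>lborel) = integral\<^sup>N lborel g"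
    using nn_integral_real_affine[OF gm, of "-1" 0] by simp
  finally show ?thesis using fin by (simp add: order_le_less_trans)
qed

lemma sing_int:
  fixes q l r :: real assumes q: "q < 1"
  shows "\<exists>M. \<forall>c\<in>{l..r}. (\<integral>\<^sup>+x. ennreal (indicator {l..r} x * \<bar>c - x\<bar> powr (-q)) \<partial>lborel) \<le> ennreal M"
proof -
  define J where "J = (\<integral>\<^sup>+y. ennreal (\<bar>y\<bar> powr (-q) * exp (-\<bar>y\<bar>)) \<partial>lborel)"
  have J: "J < \<infinity>" unfolding J_def by (rule abs_pow_int[OF q])
  show ?thesis
  proof (intro exI[of _ "exp (r - l) * enn2real J"] ballI)
    fix c assume c: "c \<in> {l..r}"
    have "(\<integral>\<^sup>+x. ennreal (indicator {l..r} x * \<bar>c - x\<bar> powr (-q)) \<partial>lborel)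
        \<le> (\<integral>\<^sup>+x. ennreal (exp (r - l)) * ennreal (\<bar>c - x\<bar> powr (-q) * exp (-\<bar>c - x\<bar>)) \<partial>lborel)"
    proof (rule nn_integral_mono)
      fix x :: real
      show "ennreal (indicator {l..r} x * \<bar>c - x\<bar> powr (-q)) \<le> ennreal (exp (r - l)) * ennreal (\<bar>c - x\<bar> powr (-q) * exp (-\<bar>c - x\<bar>))"
      proof (cases "x \<in> {l..r}")
        case True
        have "\<bar>c - x\<bar> \<le> r - l" using True c by auto
        then have "1 \<le> exp (r - l) * exp (-\<bar>c - x\<bar>)" by (simp add: exp_add[symmetric])
        then have "\<bar>c - x\<bar> powr (-q) \<le> exp (r - l) * (\<bar>c - x\<bar> powr (-q) * exp (-\<bar>c - x\<bar>))"
          using mult_right_mono[of 1 "exp (r - l) * exp (-\<bar>c - x\<bar>)" "\<bar>c - x\<bar> powr (-q)"] by (simp add: mult_ac)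
        then show ?thesis using True by (simp add: ennreal_mult[symmetric])
      qed simp
    qed
    also have "\<dots> = ennreal (exp (r - l)) * (\<integral>\<^sup>+x. ennreal (\<bar>c - x\<bar> powr (-q) * exp (-\<bar>c - x\<bar>)) \<partial>lborel)"
      by (rule nn_integral_cmult) measurable
    also have "(\<integral>\<^sup>+x. ennreal (\<bar>c - x\<bar> powr (-q) * exp (-\<bar>c - x\<bar>)) \<partial>lborel) = J"
    proof -
      have "J = ennreal \<bar>-1\<bar> * (\<integral>\<^sup>+x. ennreal (\<bar>c + (-1) * x\<bar> powr (-q) * exp (-\<bar>c + (-1) * x\<bar>)) \<partial>lborel)"
        unfolding J_def by (rule nn_integral_real_affine) auto
      then show ?thesis by simp
    qed
    also have "ennreal (exp (r - l)) * J = ennreal (exp (r - l) * enn2real J)"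
      using J by (simp add: ennreal_mult ennreal_enn2real_if)
    finally show "(\<integral>\<^sup>+x. ennreal (indicator {l..r} x * \<bar>c - x\<bar> powr (-q)) \<partial>lborel) \<le> ennreal (exp (r - l) * enn2real J)" .
  qed
qed



lemma Phi_bound:
  fixes beta lam eps l r :: real and n :: nat
  assumes beta: "beta < 1" and lam: "lam > 0" and eps: "eps > 0" "eps > 2*beta - 1" and neps: "n * eps < 1"
  shows "\<exists>M. \<forall>a. (\<integral>\<^sup>+a'. ennreal (indicator {l..r} a * indicator {l..r} a') *
      (\<integral>\<^sup>+x. ennreal (gk beta lam (a-x) * gk beta lam (a'-x)) \<partial>lborel) ^ n \<partial>lborel)
      \<le> ennreal (indicator {l..r} a) * ennreal M"
proof -
  have pos: "(0::real) < \<bar>r - l\<bar> + 1" by simp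
  obtain C where C: "C \<ge> 0" and CB: "\<And>a a'. a \<noteq> a' \<Longrightarrow> \<bar>a - a'\<bar> \<le> \<bar>r - l\<bar> + 1 \<Longrightarrow>
     (\<integral>\<^sup>+x. ennreal (gk beta lam (a-x) * gk beta lam (a'-x)) \<partial>lborel) \<le> ennreal (C * \<bar>a - a'\<bar> powr (-eps))"
    using G_bound[OF beta lam eps pos] by blast
  obtain M0 where M0: "\<And>c. c \<in> {l..r} \<Longrightarrow> (\<integral>\<^sup>+x. ennreal (indicator {l..r} x * \<bar>c - x\<bar> powr (-(n*eps))) \<partial>lborel) \<le> ennreal M0"
    using sing_int[of "n*eps" l r] neps by blast
  show ?thesis
  proof (intro exI[of _ "C^n * M0"] allI)
    fix a :: real
    show "(\<integral>\<^sup>+a'. ennreal (indicator {l..r} a * indicator {l..r} a') *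
      (\<integral>\<^sup>+x. ennreal (gk beta lam (a-x) * gk beta lam (a'-x)) \<partial>lborel) ^ n \<partial>lborel)
      \<le> ennreal (indicator {l..r} a) * ennreal (C^n * M0)"
    proof (cases "a \<in> {l..r}")
      case False then show ?thesis by simp
    next
      case a: True
      have "(\<integral>\<^sup>+a'. ennreal (indicator {l..r} a * indicator {l..r} a') *
          (\<integral>\<^sup>+x. ennreal (gk beta lam (a-x) * gk beta lam (a'-x)) \<partial>lborel) ^ n \<partial>lborel)
        \<le> (\<integral>\<^sup>+a'. ennreal (C^n) * ennreal (indicator {l..r} a' * \<bar>a - a'\<bar> powr (-(n*eps))) \<partial>lborel)"
      proof (rule nn_integral_mono_AE)
        show "AE a' in lborel. ennreal (indicator {l..r} a * indicator {l..r} a') *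
          (\<integral>\<^sup>+x. ennreal (gk beta lam (a-x) * gk beta lam (a'-x)) \<partial>lborel) ^ n
          \<le> ennreal (C^n) * ennreal (indicator {l..r} a' * \<bar>a - a'\<bar> powr (-(n*eps)))"
          using AE_lborel_singleton[of a]
        proof eventually_elim
          case (elim a')
          show ?case
          proof (cases "a' \<in> {l..r}")
            case False then show ?thesis by simp
          next
            case True
            have d: "\<bar>a - a'\<bar> \<le> \<bar>r - l\<bar> + 1" using a True by auto
            have "(\<integral>\<^sup>+x. ennreal (gk beta lam (a-x) * gk beta lam (a'-x)) \<partial>lborel) ^ n
                \<le> ennreal (C * \<bar>a - a'\<bar> powr (-eps)) ^ n"
              by (rule power_mono[OF CB[OF _ d]]) (use elim in auto)
            also have "\<dots> = ennreal ((C * \<bar>a - a'\<bar> powr (-eps)) ^ n)"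
              using C by (simp add: ennreal_power)
            also have "(C * \<bar>a - a'\<bar> powr (-eps)) ^ n = C^n * \<bar>a - a'\<bar> powr (-(n*eps))"
              using elim by (simp add: power_mult_distrib powr_power)
            finally show ?thesis using a True C by (simp add: ennreal_mult)
          qed
        qed
      qed
      also have "\<dots> = ennreal (C^n) * (\<integral>\<^sup>+a'. ennreal (indicator {l..r} a' * \<bar>a - a'\<bar> powr (-(n*eps))) \<partial>lborel)"
        by (rule nn_integral_cmult) measurable
      also have "\<dots> \<le> ennreal (C^n) * ennreal M0"
        by (rule mult_left_mono[OF M0[OF a]]) simp
      also have "\<dots> = ennreal (indicator {l..r} a) * ennreal (C^n * M0)"
        using a C by (simp add: ennreal_mult')
      finally show ?thesis .
    qed
  qed
qed



lemma Basis_pairvec: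
  "(Basis :: ((real\<times>real)^'k::finite) set) = range (\<lambda>j. axis j (1,0)) \<union> range (\<lambda>j. axis j (0,1))"
  by (auto simp: Basis_vec_def Basis_prod_def)

lemma prod_int:
  fixes f1 f2 :: "real \<Rightarrow> real"
  assumes [measurable]: "f1 \<in> borel_measurable borel" "f2 \<in> borel_measurable borel"
    and nn: "\<And>x. f1 x \<ge> 0" "\<And>x. f2 x \<ge> 0"
  shows "(\<integral>\<^sup>+z. ennreal (\<Prod>j\<in>UNIV. f1 (fst (z$j)) * f2 (snd (z$j))) \<partial>(lborel::((real\<times>real)^'k::finite) measure))
       = (\<integral>\<^sup>+x. ennreal (f1 x) \<partial>lborel) ^ CARD('k) * (\<integral>\<^sup>+y. ennreal (f2 y) \<partial>lborel) ^ CARD('k)"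
proof -
  define A where "A = range (\<lambda>j::'k. axis j (1::real,0::real))"
  define B where "B = range (\<lambda>j::'k. axis j (0::real,1::real))"
  define ff where "ff = (\<lambda>b::(real\<times>real)^'k. if b \<in> A then (\<lambda>x. ennreal (f1 x)) else (\<lambda>x. ennreal (f2 x)))"
  have BAB: "(Basis :: ((real\<times>real)^'k) set) = A \<union> B" unfolding A_def B_def by (rule Basis_pairvec)
  have disj: "A \<inter> B = {}" by (auto simp: A_def B_def axis_eq_axis zero_prod_def)
  have injA: "inj (\<lambda>j::'k. axis j (1::real,0::real))" by (auto intro!: injI simp: axis_eq_axis zero_prod_def)
  have injB: "inj (\<lambda>j::'k. axis j (0::real,1::real))" by (auto intro!: injI simp: axis_eq_axis zero_prod_def)
  have finA: "finite A" "finite B" by (auto simp: A_def B_def)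
  have ffA: "b \<in> A \<Longrightarrow> ff b = (\<lambda>x. ennreal (f1 x))" for b by (simp add: ff_def)
  have ffB: "b \<in> B \<Longrightarrow> ff b = (\<lambda>x. ennreal (f2 x))" for b using disj by (auto simp: ff_def)
  have m: "\<And>b. b \<in> Basis \<Longrightarrow> ff b \<in> borel_measurable borel" by (simp add: ff_def)
  have "(\<integral>\<^sup>+z. (\<Prod>b\<in>Basis. ff b (z \<bullet> b)) \<partial>(lborel::((real\<times>real)^'k) measure)) = (\<Prod>b\<in>Basis. (\<integral>\<^sup>+x. ff b x \<partial>lborel))"
    by (rule nn_integral_lborel_prod) (auto simp: m)
  also have "(\<Prod>b\<in>Basis. (\<integral>\<^sup>+x. ff b x \<partial>lborel)) = (\<Prod>b\<in>A. (\<integral>\<^sup>+x. ff b x \<partial>lborel)) * (\<Prod>b\<in>B. (\<integral>\<^sup>+x. ff b x \<partial>lborel))"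
    unfolding BAB by (rule prod.union_disjoint[OF finA disj])
  also have "\<dots> = (\<integral>\<^sup>+x. ennreal (f1 x) \<partial>lborel) ^ CARD('k) * (\<integral>\<^sup>+y. ennreal (f2 y) \<partial>lborel) ^ CARD('k)"
    using ffA ffB card_image[OF injA] card_image[OF injB] by (simp add: A_def B_def)
  also have "(\<integral>\<^sup>+z. (\<Prod>b\<in>Basis. ff b (z \<bullet> b)) \<partial>(lborel::((real\<times>real)^'k) measure))
     = (\<integral>\<^sup>+z. ennreal (\<Prod>j\<in>UNIV. f1 (fst (z$j)) * f2 (snd (z$j))) \<partial>(lborel::((real\<times>real)^'k) measure))"
  proof (rule nn_integral_cong)
    fix z :: "(real\<times>real)^'k"
    have "(\<Prod>b\<in>Basis. ff b (z \<bullet> b)) = (\<Prod>b\<in>A. ff b (z \<bullet> b)) * (\<Prod>b\<in>B. ff b (z \<bullet> b))"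
      unfolding BAB by (rule prod.union_disjoint[OF finA disj])
    also have "(\<Prod>b\<in>A. ff b (z \<bullet> b)) = (\<Prod>j\<in>UNIV. ennreal (f1 (fst (z$j))))"
      unfolding A_def by (subst prod.reindex[OF injA]) (auto simp: ffA[unfolded A_def] inner_axis inner_prod_def)
    also have "(\<Prod>b\<in>B. ff b (z \<bullet> b)) = (\<Prod>j\<in>UNIV. ennreal (f2 (snd (z$j))))"
      unfolding B_def by (subst prod.reindex[OF injB]) (auto simp: ffB[unfolded B_def] inner_axis inner_prod_def)
    also have "(\<Prod>j\<in>UNIV. ennreal (f1 (fst (z$j)))) * (\<Prod>j\<in>UNIV. ennreal (f2 (snd (z$j))))
       = ennreal (\<Prod>j\<in>UNIV. f1 (fst (z$j)) * f2 (snd (z$j)))"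
      using nn by (simp add: prod_ennreal prod.distrib ennreal_mult[symmetric] prod_nonneg)
    finally show "(\<Prod>b\<in>Basis. ff b (z \<bullet> b)) = ennreal (\<Prod>j\<in>UNIV. f1 (fst (z$j)) * f2 (snd (z$j)))" .
  qed
  finally show ?thesis .
qed




lemma lbint_bound:
  fixes f :: "real \<Rightarrow> real" and t :: real
  shows "ennreal \<bar>LBINT x=0..t. f x\<bar> \<le> (\<integral>\<^sup>+x. ennreal (indicator {min 0 t..max 0 t} x * \<bar>f x\<bar>) \<partial>lborel)"
proof -
  have gen: "ennreal \<bar>LINT x:A|lborel. f x\<bar> \<le> (\<integral>\<^sup>+x. ennreal (indicator {min 0 t..max 0 t} x * \<bar>f x\<bar>) \<partial>lborel)"
    if A: "A \<subseteq> {min 0 t..max 0 t}" for A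
  proof (cases "set_integrable lborel A f")
    case True
    have "ennreal \<bar>LINT x:A|lborel. f x\<bar> \<le> (\<integral>\<^sup>+x. ennreal (norm (indicator A x *\<^sub>R f x)) \<partial>lborel)"
      using integral_norm_bound_ennreal[OF True[unfolded set_integrable_def]] by (simp add: set_lebesgue_integral_def)
    also have "\<dots> \<le> (\<integral>\<^sup>+x. ennreal (indicator {min 0 t..max 0 t} x * \<bar>f x\<bar>) \<partial>lborel)"
      by (rule nn_integral_mono) (use A in \<open>auto simp: indicator_def\<close>)
    finally show ?thesis .
  next
    case False
    then have "(LINT x:A|lborel. f x) = 0" unfolding set_lebesgue_integral_def set_integrable_def
      by (rule not_integrable_integral_eq)
    then show ?thesis by simp
  qed
  have e1: "einterval 0 (ereal t) = {0<..<t}" using einterval_eq_Icc[of 0 t] by (simp add: zero_ereal_def)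
  have e2: "einterval (ereal t) 0 = {t<..<0}" using einterval_eq_Icc[of t 0] by (simp add: zero_ereal_def)
  show ?thesis
  proof (cases "0 \<le> t")
    case True
    have "ennreal \<bar>LINT x:{0<..<t}|lborel. f x\<bar> \<le> (\<integral>\<^sup>+x. ennreal (indicator {min 0 t..max 0 t} x * \<bar>f x\<bar>) \<partial>lborel)"
      by (rule gen) auto
    then show ?thesis using True by (simp add: interval_lebesgue_integral_def e1)
  next
    case False
    have "ennreal \<bar>LINT x:{t<..<0}|lborel. f x\<bar> \<le> (\<integral>\<^sup>+x. ennreal (indicator {min 0 t..max 0 t} x * \<bar>f x\<bar>) \<partial>lborel)"
      by (rule gen) auto
    then show ?thesis using False by (simp add: interval_lebesgue_integral_def e2)
  qed
qed

theorem mainTheorem2: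
  fixes H1 H2 lam1 lam2 t s :: real
  assumes "H1 > 1/2" and "H2 > 1/2" and "lam1 > 0" and "lam2 > 0"
  shows "(AE z in (lborel :: ((real \<times> real) ^ 'k::finite) measure).
            set_integrable lborel ({min 0 t..max 0 t} \<times> {min 0 s..max 0 s})
              (\<lambda>(a, b). integrand H1 H2 lam1 lam2 z a b))
         \<and> hfun H1 H2 lam1 lam2 t s \<in> borel_measurable (lborel :: ((real \<times> real) ^ 'k) measure)
         \<and> integrable (lborel :: ((real \<times> real) ^ 'k) measure) (\<lambda>z. (hfun H1 H2 lam1 lam2 t s z)\<^sup>2)"
proof -
  define k where "k = CARD('k)"
  have k1: "real k \<ge> 1" unfolding k_def using finite_UNIV_card_ge_0[where 'a='k] by simp
  define b1 where "b1 = 1/2 + (1 - H1) / real k"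
  define b2 where "b2 = 1/2 + (1 - H2) / real k"
  have kern1: "kern CARD('k) H1 lam1 = gk b1 lam1" by (rule ext) (simp add: kern_def gk_def b1_def k_def)
  have kern2: "kern CARD('k) H2 lam2 = gk b2 lam2" by (rule ext) (simp add: kern_def gk_def b2_def k_def)
  have b1k: "2*b1 - 1 < 1 / real k" unfolding b1_def using assms(1) k1 by (simp add: field_simps)
  have b2k: "2*b2 - 1 < 1 / real k" unfolding b2_def using assms(2) k1 by (simp add: field_simps)
  have b1lt: "b1 < 1" using b1k k1 by (smt (verit) divide_le_eq_1)
  have b2lt: "b2 < 1" using b2k k1 by (smt (verit) divide_le_eq_1)
  define e1 where "e1 = (max (2*b1 - 1) 0 + 1 / real k) / 2"
  define e2 where "e2 = (max (2*b2 - 1) 0 + 1 / real k) / 2"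
  have "1 / real k > 0" using k1 by simp
  then have e1pos: "e1 > 0" and e1gt: "e1 > 2*b1 - 1" unfolding e1_def using b1k by (auto simp: max_def)
  have "1 / real k > 0" using k1 by simp
  then have e2pos: "e2 > 0" and e2gt: "e2 > 2*b2 - 1" unfolding e2_def using b2k by (auto simp: max_def)
  have ke1: "real k * e1 < 1"
  proof -
    have "real k * max (2*b1 - 1) 0 < 1" using b1k k1 by (auto simp: max_def field_simps)
    then show ?thesis unfolding e1_def using k1 by (simp add: field_simps)
  qed
  have ke2: "real k * e2 < 1"
  proof -
    have "real k * max (2*b2 - 1) 0 < 1" using b2k k1 by (auto simp: max_def field_simps)
    then show ?thesis unfolding e2_def using k1 by (simp add: field_simps)
  qed
  define I where "I = {min 0 t..max 0 t}"
  define J where "J = {min 0 s..max 0 s}"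
  have [measurable]: "I \<in> sets borel" "J \<in> sets borel" by (auto simp: I_def J_def)
  obtain M1 where M1: "\<And>a. (\<integral>\<^sup>+a'. ennreal (indicator I a * indicator I a') *
      (\<integral>\<^sup>+x. ennreal (gk b1 lam1 (a-x) * gk b1 lam1 (a'-x)) \<partial>lborel) ^ k \<partial>lborel)
      \<le> ennreal (indicator I a) * ennreal M1"
    using Phi_bound[OF b1lt assms(3) e1pos e1gt ke1, of "min 0 t" "max 0 t"] unfolding I_def by blast
  obtain M2 where M2: "\<And>b. (\<integral>\<^sup>+b'. ennreal (indicator J b * indicator J b') *
      (\<integral>\<^sup>+y. ennreal (gk b2 lam2 (b-y) * gk b2 lam2 (b'-y)) \<partial>lborel) ^ k \<partial>lborel)
      \<le> ennreal (indicator J b) * ennreal M2"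
    using Phi_bound[OF b2lt assms(4) e2pos e2gt ke2, of "min 0 s" "max 0 s"] unfolding J_def by blast
  have F_eq: "integrand H1 H2 lam1 lam2 z a b = (\<Prod>j\<in>UNIV. gk b1 lam1 (a - fst (z$j)) * gk b2 lam2 (b - snd (z$j)))"
    for z :: "(real\<times>real)^'k" and a b
    by (simp add: integrand_def kern1 kern2)
  have Fnn: "integrand H1 H2 lam1 lam2 z a b \<ge> 0" for z :: "(real\<times>real)^'k" and a b
    by (simp add: F_eq gk_nonneg prod_nonneg)
  define N where "N z = (\<integral>\<^sup>+a. \<integral>\<^sup>+b. ennreal (indicator I a * indicator J b * integrand H1 H2 lam1 lam2 z a b) \<partial>lborel \<partial>lborel)"
    for z :: "(real\<times>real)^'k"
  have Nm[measurable]: "N \<in> borel_measurable lborel" unfolding N_def by measurable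

  define Q where "Q z a b a' b' = ennreal (indicator I a * indicator J b * integrand H1 H2 lam1 lam2 z a b) *
      ennreal (indicator I a' * indicator J b' * integrand H1 H2 lam1 lam2 z a' b')"
    for z :: "(real\<times>real)^'k" and a b a' b'
  have NN: "N z * N z = (\<integral>\<^sup>+a. \<integral>\<^sup>+b. \<integral>\<^sup>+a'. \<integral>\<^sup>+b'. Q z a b a' b' \<partial>lborel \<partial>lborel \<partial>lborel \<partial>lborel)" for z
  proof -
    have "N z * N z = (\<integral>\<^sup>+a. (\<integral>\<^sup>+b. ennreal (indicator I a * indicator J b * integrand H1 H2 lam1 lam2 z a b) \<partial>lborel) * N z \<partial>lborel)"
      unfolding N_def[of z] by (rule nn_integral_multc[symmetric]) measurable
    also have "\<dots> = (\<integral>\<^sup>+a. \<integral>\<^sup>+b. ennreal (indicator I a * indicator J b * integrand H1 H2 lam1 lam2 z a b) * N z \<partial>lborel \<partial>lborel)"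
      by (rule nn_integral_cong, rule nn_integral_multc[symmetric]) measurable
    also have "\<dots> = (\<integral>\<^sup>+a. \<integral>\<^sup>+b. \<integral>\<^sup>+a'. \<integral>\<^sup>+b'. Q z a b a' b' \<partial>lborel \<partial>lborel \<partial>lborel \<partial>lborel)"
    proof (intro nn_integral_cong)
      fix a b
      have "ennreal (indicator I a * indicator J b * integrand H1 H2 lam1 lam2 z a b) * N z
        = (\<integral>\<^sup>+a'. ennreal (indicator I a * indicator J b * integrand H1 H2 lam1 lam2 z a b) *
             (\<integral>\<^sup>+b'. ennreal (indicator I a' * indicator J b' * integrand H1 H2 lam1 lam2 z a' b') \<partial>lborel) \<partial>lborel)"
        unfolding N_def[of z] by (rule nn_integral_cmult[symmetric]) measurable
      also have "\<dots> = (\<integral>\<^sup>+a'. \<integral>\<^sup>+b'. Q z a b a' b' \<partial>lborel \<partial>lborel)"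
        unfolding Q_def by (rule nn_integral_cong, rule nn_integral_cmult[symmetric]) measurable
      finally show "ennreal (indicator I a * indicator J b * integrand H1 H2 lam1 lam2 z a b) * N z
        = (\<integral>\<^sup>+a'. \<integral>\<^sup>+b'. Q z a b a' b' \<partial>lborel \<partial>lborel)" .
    qed
    finally show ?thesis .
  qed
  have swapped: "(\<integral>\<^sup>+z. N z * N z \<partial>lborel) = (\<integral>\<^sup>+a. \<integral>\<^sup>+b. \<integral>\<^sup>+a'. \<integral>\<^sup>+b'. \<integral>\<^sup>+z. Q z a b a' b' \<partial>lborel \<partial>lborel \<partial>lborel \<partial>lborel \<partial>lborel)"
  proof -
    have "(\<integral>\<^sup>+z. N z * N z \<partial>lborel) = (\<integral>\<^sup>+z. \<integral>\<^sup>+a. \<integral>\<^sup>+b. \<integral>\<^sup>+a'. \<integral>\<^sup>+b'. Q z a b a' b' \<partial>lborel \<partial>lborel \<partial>lborel \<partial>lborel \<partial>lborel)"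
      by (simp add: NN)
    also have "\<dots> = (\<integral>\<^sup>+a. \<integral>\<^sup>+z. \<integral>\<^sup>+b. \<integral>\<^sup>+a'. \<integral>\<^sup>+b'. Q z a b a' b' \<partial>lborel \<partial>lborel \<partial>lborel \<partial>lborel \<partial>lborel)"
      by (rule swapz) (unfold Q_def, measurable)
    also have "\<dots> = (\<integral>\<^sup>+a. \<integral>\<^sup>+b. \<integral>\<^sup>+z. \<integral>\<^sup>+a'. \<integral>\<^sup>+b'. Q z a b a' b' \<partial>lborel \<partial>lborel \<partial>lborel \<partial>lborel \<partial>lborel)"
      by (rule nn_integral_cong, rule swapz) (unfold Q_def, measurable)
    also have "\<dots> = (\<integral>\<^sup>+a. \<integral>\<^sup>+b. \<integral>\<^sup>+a'. \<integral>\<^sup>+z. \<integral>\<^sup>+b'. Q z a b a' b' \<partial>lborel \<partial>lborel \<partial>lborel \<partial>lborel \<partial>lborel)"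
      by (rule nn_integral_cong, rule nn_integral_cong, rule swapz) (unfold Q_def, measurable)
    also have "\<dots> = (\<integral>\<^sup>+a. \<integral>\<^sup>+b. \<integral>\<^sup>+a'. \<integral>\<^sup>+b'. \<integral>\<^sup>+z. Q z a b a' b' \<partial>lborel \<partial>lborel \<partial>lborel \<partial>lborel \<partial>lborel)"
      by (rule nn_integral_cong, rule nn_integral_cong, rule nn_integral_cong, rule swapz) (unfold Q_def, measurable)
    finally show ?thesis .
  qed

  define P1 where "P1 a a' = ennreal (indicator I a * indicator I a') *
      (\<integral>\<^sup>+x. ennreal (gk b1 lam1 (a-x) * gk b1 lam1 (a'-x)) \<partial>lborel) ^ k" for a a'
  define P2 where "P2 b b' = ennreal (indicator J b * indicator J b') *
      (\<integral>\<^sup>+y. ennreal (gk b2 lam2 (b-y) * gk b2 lam2 (b'-y)) \<partial>lborel) ^ k" for b b'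
  have zint: "(\<integral>\<^sup>+z. Q z a b a' b' \<partial>lborel) = P1 a a' * P2 b b'" for a b a' b'
  proof -
    have "(\<integral>\<^sup>+z. Q z a b a' b' \<partial>lborel) = (\<integral>\<^sup>+z. ennreal (indicator I a * indicator I a' * (indicator J b * indicator J b')) *
       ennreal (\<Prod>j\<in>UNIV. (gk b1 lam1 (a - fst (z$j)) * gk b1 lam1 (a' - fst (z$j))) * (gk b2 lam2 (b - snd (z$j)) * gk b2 lam2 (b' - snd (z$j)))) \<partial>(lborel::((real\<times>real)^'k) measure))"
    proof (rule nn_integral_cong)
      fix z :: "(real\<times>real)^'k"
      have prodeq: "integrand H1 H2 lam1 lam2 z a b * integrand H1 H2 lam1 lam2 z a' b' =
         (\<Prod>j\<in>UNIV. (gk b1 lam1 (a - fst (z$j)) * gk b1 lam1 (a' - fst (z$j))) * (gk b2 lam2 (b - snd (z$j)) * gk b2 lam2 (b' - snd (z$j))))"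
        unfolding F_eq prod.distrib[symmetric] by (rule prod.cong) (auto simp: mult_ac)
      show "Q z a b a' b' = ennreal (indicator I a * indicator I a' * (indicator J b * indicator J b')) *
       ennreal (\<Prod>j\<in>UNIV. (gk b1 lam1 (a - fst (z$j)) * gk b1 lam1 (a' - fst (z$j))) * (gk b2 lam2 (b - snd (z$j)) * gk b2 lam2 (b' - snd (z$j))))"
      proof -
        have "Q z a b a' b' = ennreal ((indicator I a * indicator J b * integrand H1 H2 lam1 lam2 z a b) * (indicator I a' * indicator J b' * integrand H1 H2 lam1 lam2 z a' b'))"
          unfolding Q_def by (rule ennreal_mult[symmetric]) (use Fnn in auto)
        also have "\<dots> = ennreal ((indicator I a * indicator I a' * (indicator J b * indicator J b')) * (integrand H1 H2 lam1 lam2 z a b * integrand H1 H2 lam1 lam2 z a' b'))"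
          by (simp add: mult_ac)
        also have "\<dots> = ennreal (indicator I a * indicator I a' * (indicator J b * indicator J b')) * ennreal (integrand H1 H2 lam1 lam2 z a b * integrand H1 H2 lam1 lam2 z a' b')"
          by (rule ennreal_mult) (auto simp: Fnn)
        finally show ?thesis using prodeq by simp
      qed
    qed
    also have "\<dots> = ennreal (indicator I a * indicator I a' * (indicator J b * indicator J b')) *
       ((\<integral>\<^sup>+x. ennreal (gk b1 lam1 (a-x) * gk b1 lam1 (a'-x)) \<partial>lborel) ^ CARD('k) *
        (\<integral>\<^sup>+y. ennreal (gk b2 lam2 (b-y) * gk b2 lam2 (b'-y)) \<partial>lborel) ^ CARD('k))"
    proof -
      have pi: "(\<integral>\<^sup>+z. ennreal (\<Prod>j\<in>UNIV. (gk b1 lam1 (a - fst (z$j)) * gk b1 lam1 (a' - fst (z$j))) * (gk b2 lam2 (b - snd (z$j)) * gk b2 lam2 (b' - snd (z$j)))) \<partial>(lborel::((real\<times>real)^'k) measure))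
        = (\<integral>\<^sup>+x. ennreal (gk b1 lam1 (a-x) * gk b1 lam1 (a'-x)) \<partial>lborel) ^ CARD('k) *
          (\<integral>\<^sup>+y. ennreal (gk b2 lam2 (b-y) * gk b2 lam2 (b'-y)) \<partial>lborel) ^ CARD('k)"
        by (rule prod_int[of "\<lambda>x. gk b1 lam1 (a-x) * gk b1 lam1 (a'-x)" "\<lambda>y. gk b2 lam2 (b-y) * gk b2 lam2 (b'-y)"])
           (measurable, measurable, simp_all add: gk_nonneg)
      show ?thesis by (subst nn_integral_cmult) (measurable, simp add: pi)
    qed
    also have "\<dots> = P1 a a' * P2 b b'"
      by (simp add: P1_def P2_def k_def ennreal_mult mult_ac)
    finally show ?thesis .
  qed
  have key: "(\<integral>\<^sup>+z. N z * N z \<partial>(lborel::((real\<times>real)^'k) measure)) < \<infinity>"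
  proof -
    have "(\<integral>\<^sup>+z. N z * N z \<partial>(lborel::((real\<times>real)^'k) measure)) = (\<integral>\<^sup>+a. \<integral>\<^sup>+b. \<integral>\<^sup>+a'. \<integral>\<^sup>+b'. P1 a a' * P2 b b' \<partial>lborel \<partial>lborel \<partial>lborel \<partial>lborel)"
      by (simp add: swapped zint)
    also have "\<dots> \<le> (\<integral>\<^sup>+a. \<integral>\<^sup>+b. (ennreal (indicator I a) * ennreal M1) * (ennreal (indicator J b) * ennreal M2) \<partial>lborel \<partial>lborel)"
    proof (intro nn_integral_mono)
      fix a b
      have "(\<integral>\<^sup>+a'. \<integral>\<^sup>+b'. P1 a a' * P2 b b' \<partial>lborel \<partial>lborel) = (\<integral>\<^sup>+a'. P1 a a' * (\<integral>\<^sup>+b'. P2 b b' \<partial>lborel) \<partial>lborel)"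
        by (rule nn_integral_cong, rule nn_integral_cmult) (unfold P2_def, measurable)
      also have "\<dots> \<le> (\<integral>\<^sup>+a'. P1 a a' * (ennreal (indicator J b) * ennreal M2) \<partial>lborel)"
        by (intro nn_integral_mono mult_left_mono) (use M2 in \<open>auto simp: P2_def\<close>)
      also have "\<dots> = (\<integral>\<^sup>+a'. P1 a a' \<partial>lborel) * (ennreal (indicator J b) * ennreal M2)"
        by (rule nn_integral_multc) (unfold P1_def, measurable)
      also have "\<dots> \<le> (ennreal (indicator I a) * ennreal M1) * (ennreal (indicator J b) * ennreal M2)"
        by (intro mult_right_mono) (use M1 in \<open>auto simp: P1_def\<close>)
      finally show "(\<integral>\<^sup>+a'. \<integral>\<^sup>+b'. P1 a a' * P2 b b' \<partial>lborel \<partial>lborel) \<le> (ennreal (indicator I a) * ennreal M1) * (ennreal (indicator J b) * ennreal M2)" .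
    qed
    also have "\<dots> = (\<integral>\<^sup>+a. (ennreal (indicator I a) * ennreal M1) * (emeasure lborel J * ennreal M2) \<partial>lborel)"
      by (rule nn_integral_cong, subst nn_integral_cmult, measurable, subst nn_integral_multc, measurable) (simp add: ennreal_indicator J_def)
    also have "\<dots> = emeasure lborel I * ennreal M1 * (emeasure lborel J * ennreal M2)"
      by (subst nn_integral_multc, measurable, subst nn_integral_multc, measurable) (simp add: ennreal_indicator I_def)
    also have "\<dots> < \<infinity>"
      by (simp add: I_def J_def ennreal_mult_less_top)
    finally show ?thesis .
  qed
  have NNm: "(\<lambda>z. N z * N z) \<in> borel_measurable lborel" by measurable
  have Nfin: "AE z in (lborel::((real\<times>real)^'k) measure). N z \<noteq> \<infinity>"
  proof -
    have "AE z in (lborel::((real\<times>real)^'k) measure). N z * N z \<noteq> \<infinity>"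
      by (rule nn_integral_PInf_AE[OF NNm]) (use key in simp)
    then show ?thesis by eventually_elim auto
  qed
  have part1: "AE z in (lborel :: ((real \<times> real) ^ 'k) measure).
            set_integrable lborel ({min 0 t..max 0 t} \<times> {min 0 s..max 0 s})
              (\<lambda>(a, b). integrand H1 H2 lam1 lam2 z a b)"
    using Nfin
  proof eventually_elim
    case (elim z)
    show ?case
      unfolding set_integrable_def
    proof (rule integrableI_bounded)
      show "(\<lambda>p. indicator ({min 0 t..max 0 t} \<times> {min 0 s..max 0 s}) p *\<^sub>R (\<lambda>(a, b). integrand H1 H2 lam1 lam2 z a b) p) \<in> borel_measurable lborel"
        by (subst lborel_prod[symmetric]) measurable
      have "(\<integral>\<^sup>+p. ennreal (norm (indicator ({min 0 t..max 0 t} \<times> {min 0 s..max 0 s}) p *\<^sub>R (\<lambda>(a, b). integrand H1 H2 lam1 lam2 z a b) p)) \<partial>lborel)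
          = (\<integral>\<^sup>+p. (\<lambda>(a,b). ennreal (indicator I a * indicator J b * integrand H1 H2 lam1 lam2 z a b)) p \<partial>(lborel \<Otimes>\<^sub>M lborel))"
        by (subst lborel_prod[symmetric], rule nn_integral_cong)
           (auto simp: I_def J_def indicator_times Fnn abs_mult split: prod.splits)
      also have "\<dots> = N z"
      proof -
        have m: "(\<lambda>(a,b). ennreal (indicator I a * indicator J b * integrand H1 H2 lam1 lam2 z a b)) \<in> borel_measurable (lborel \<Otimes>\<^sub>M lborel)"
          by measurable
        show ?thesis using lborel.nn_integral_fst[OF m] by (simp add: N_def)
      qed
      finally show "(\<integral>\<^sup>+p. ennreal (norm (indicator ({min 0 t..max 0 t} \<times> {min 0 s..max 0 s}) p *\<^sub>R (\<lambda>(a, b). integrand H1 H2 lam1 lam2 z a b) p)) \<partial>lborel) < \<infinity>"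
        using elim by (simp add: top.not_eq_extremum)
    qed
  qed
  have part2: "hfun H1 H2 lam1 lam2 t s \<in> borel_measurable (lborel :: ((real \<times> real) ^ 'k) measure)"
    unfolding hfun_def interval_lebesgue_integral_def set_lebesgue_integral_def by measurable
  have hbound: "ennreal \<bar>hfun H1 H2 lam1 lam2 t s z\<bar> \<le> N z" for z :: "(real\<times>real)^'k"
  proof -
    have "ennreal \<bar>hfun H1 H2 lam1 lam2 t s z\<bar> \<le> (\<integral>\<^sup>+a. ennreal (indicator I a * \<bar>LBINT b=0..s. integrand H1 H2 lam1 lam2 z a b\<bar>) \<partial>lborel)"
      unfolding hfun_def I_def by (rule lbint_bound)
    also have "\<dots> \<le> (\<integral>\<^sup>+a. ennreal (indicator I a) * (\<integral>\<^sup>+b. ennreal (indicator J b * \<bar>integrand H1 H2 lam1 lam2 z a b\<bar>) \<partial>lborel) \<partial>lborel)"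
    proof (rule nn_integral_mono)
      fix a
      show "ennreal (indicator I a * \<bar>LBINT b=0..s. integrand H1 H2 lam1 lam2 z a b\<bar>) \<le> ennreal (indicator I a) * (\<integral>\<^sup>+b. ennreal (indicator J b * \<bar>integrand H1 H2 lam1 lam2 z a b\<bar>) \<partial>lborel)"
        using lbint_bound[of s "\<lambda>b. integrand H1 H2 lam1 lam2 z a b"]
        by (auto simp: ennreal_mult J_def intro!: mult_left_mono)
    qed
    also have "\<dots> = N z"
      unfolding N_def
      by (rule nn_integral_cong, subst nn_integral_cmult[symmetric], measurable, rule nn_integral_cong)
         (simp add: Fnn ennreal_mult[symmetric] mult_ac)
    finally show ?thesis .
  qed
  have part3: "integrable (lborel :: ((real \<times> real) ^ 'k) measure) (\<lambda>z. (hfun H1 H2 lam1 lam2 t s z)\<^sup>2)"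
  proof (rule integrableI_bounded)
    show "(\<lambda>z. (hfun H1 H2 lam1 lam2 t s z)\<^sup>2) \<in> borel_measurable (lborel :: ((real \<times> real) ^ 'k) measure)" using part2 by (rule borel_measurable_power)
    have "(\<integral>\<^sup>+z. ennreal (norm ((hfun H1 H2 lam1 lam2 t s z)\<^sup>2)) \<partial>(lborel::((real\<times>real)^'k) measure)) \<le> (\<integral>\<^sup>+z. N z * N z \<partial>(lborel::((real\<times>real)^'k) measure))"
    proof (rule nn_integral_mono)
      fix z :: "(real\<times>real)^'k"
      have "ennreal (norm ((hfun H1 H2 lam1 lam2 t s z)\<^sup>2)) = ennreal \<bar>hfun H1 H2 lam1 lam2 t s z\<bar> * ennreal \<bar>hfun H1 H2 lam1 lam2 t s z\<bar>"
        by (simp add: ennreal_mult[symmetric] power2_eq_square abs_mult)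
      also have "\<dots> \<le> N z * N z" by (intro mult_mono hbound) auto
      finally show "ennreal (norm ((hfun H1 H2 lam1 lam2 t s z)\<^sup>2)) \<le> N z * N z" .
    qed
    then show "(\<integral>\<^sup>+z. ennreal (norm ((hfun H1 H2 lam1 lam2 t s z)\<^sup>2)) \<partial>(lborel::((real\<times>real)^'k) measure)) < \<infinity>"
      using key by (simp add: le_less_trans)
  qed
  show ?thesis using part1 part2 part3 by blast
qed


end
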